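(* Let $G$ be a graph and $\ell=\mathrm{OPT}(G)-\mathrm{LP}(G)$. There exists a set $X\subseteq V(G)$ with $|X|\le 2\ell$ such that $\mathrm{OPT}(G-X)=\mathrm{LP}(G-X)$.
   Context: $\mathrm{OPT}(G)$ is the minimum size of a vertex cover of $G$; $\mathrm{LP}(G)=\min\{\sum_{v\in V(G)}x_v : x_u+x_v\ge1\text{ for all }\{u,v\}\in E(G),\ 0\le x_v\le1\}$. *)

theory Defs
  imports Main "HOL.Real"
begin

definition graph :: "'a set \<Rightarrow> 'a set set \<Rightarrow> bool" where
  "graph V E \<longleftrightarrow> finite V \<and> (\<forall>e\<in>E. e \<subseteq> V \<and> card e = 2)"

definition vertex_cover :: "'a set \<Rightarrow> 'a set set \<Rightarrow> 'a set \<Rightarrow> bool" where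
  "vertex_cover V E C \<longleftrightarrow> C \<subseteq> V \<and> (\<forall>e\<in>E. e \<inter> C \<noteq> {})"

definition OPT :: "'a set \<Rightarrow> 'a set set \<Rightarrow> nat" where
  "OPT V E = (LEAST k. \<exists>C. vertex_cover V E C \<and> card C = k)"

definition LP_feasible :: "'a set \<Rightarrow> 'a set set \<Rightarrow> ('a \<Rightarrow> real) \<Rightarrow> bool" where
  "LP_feasible V E x \<longleftrightarrow>
     (\<forall>u v. {u, v} \<in> E \<longrightarrow> x u + x v \<ge> 1) \<and> (\<forall>v\<in>V. 0 \<le> x v \<and> x v \<le> 1)"

definition LP :: "'a set \<Rightarrow> 'a set set \<Rightarrow> real" where
  "LP V E = Inf {(\<Sum>v\<in>V. x v) | x. LP_feasible V E x}"

definition del_vertices_V :: "'a set \<Rightarrow> 'a set \<Rightarrow> 'a set" where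
  "del_vertices_V V X = V - X"

definition del_vertices_E :: "'a set set \<Rightarrow> 'a set \<Rightarrow> 'a set set" where
  "del_vertices_E E X = {e\<in>E. e \<inter> X = {}}"

end

theory Submission imports Defs begin

lemma hall:
  fixes R :: "('a \<times> 'b) set"
  assumes "finite C" "finite I" "\<forall>c i. (c,i)\<in>R \<longrightarrow> i\<in>I" "\<forall>A\<subseteq>C. card A \<le> card (R `` A)"
  shows "\<exists>f. inj_on f C \<and> (\<forall>c\<in>C. (c, f c) \<in> R)"
  using assms
proof (induction "card C" arbitrary: C R rule: less_induct)
  case less
  note fin = less.prems(1) and finI = less.prems(2) and RI = less.prems(3) and H = less.prems(4)
  have finIm: "finite (S `` A)" if "\<forall>c i. (c,i)\<in>S \<longrightarrow> i\<in>I" for S :: "('a \<times> 'b) set" and A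
    using finite_subset[OF _ finI] that by blast
  show ?case
  proof (cases "C = {}")
    case True then show ?thesis by auto
  next
    case ne: False
    show ?thesis
    proof (cases "\<forall>A. A \<subseteq> C \<and> A \<noteq> {} \<and> A \<noteq> C \<longrightarrow> card A < card (R `` A)")
      case True
      obtain c where c: "c \<in> C" using ne by auto
      have "card {c} \<le> card (R `` {c})" using H c by auto
      then have "R `` {c} \<noteq> {}" by auto
      then obtain i where ci: "(c,i) \<in> R" by auto
      define C' where "C' = C - {c}"
      define R' where "R' = {p\<in>R. snd p \<noteq> i}"
      have "\<exists>f. inj_on f C' \<and> (\<forall>c\<in>C'. (c, f c) \<in> R')"
      proof (rule less.hyps)
        show "card C' < card C" using c fin unfolding C'_def by (meson card_Diff1_less)
        show "finite C'" using fin by (simp add: C'_def)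
        show "finite I" by fact
        show "\<forall>c i. (c,i)\<in>R' \<longrightarrow> i\<in>I" using RI by (auto simp: R'_def)
        show "\<forall>A\<subseteq>C'. card A \<le> card (R' `` A)"
        proof (intro allI impI)
          fix A assume A: "A \<subseteq> C'"
          show "card A \<le> card (R' `` A)"
          proof (cases "A = {}")
            case True then show ?thesis by simp
          next
            case False
            have "A \<noteq> C" using A c by (auto simp: C'_def)
            then have lt: "card A < card (R `` A)" using True A False by (auto simp: C'_def)
            have eq: "R' `` A = R `` A - {i}" by (auto simp: R'_def)
            have "card (R `` A) - 1 \<le> card (R `` A - {i})"
              by (simp add: card_Diff_singleton_if)
            then show ?thesis using lt eq by simp
          qed
        qed
      qed
      then obtain f' where f': "inj_on f' C'" "\<forall>c\<in>C'. (c, f' c) \<in> R'" by blast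
      define f where "f = f'(c := i)"
      have Ceq: "C = insert c C'" using c by (auto simp: C'_def)
      have "inj_on f C'" using f' by (simp add: f_def C'_def inj_on_def)
      moreover have "f c \<notin> f ` C'" using f'(2) by (auto simp: f_def R'_def C'_def)
      ultimately have "inj_on f (insert c C')" by (auto simp: inj_on_insert)
      then have "inj_on f C" using Ceq by simp
      moreover have "\<forall>x\<in>C. (x, f x) \<in> R"
      proof
        fix x assume "x \<in> C"
        then show "(x, f x) \<in> R" using f'(2) ci unfolding f_def R'_def C'_def by (cases "x = c") auto
      qed
      ultimately show ?thesis by blast
    next
      case False
      then obtain A where A: "A \<subseteq> C" "A \<noteq> {}" "A \<noteq> C" "\<not> card A < card (R `` A)" by blast
      have "card A \<le> card (R `` A)" using H A(1) by blast
      then have cardA: "card (R `` A) = card A" using A(4) by linarith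
      have "\<exists>f. inj_on f A \<and> (\<forall>c\<in>A. (c, f c) \<in> R)"
      proof (rule less.hyps)
        show "card A < card C" using A fin by (meson psubset_card_mono psubsetI)
        show "finite A" using A fin finite_subset by blast
        show "finite I" by fact
        show "\<forall>c i. (c,i)\<in>R \<longrightarrow> i\<in>I" by fact
        show "\<forall>B\<subseteq>A. card B \<le> card (R `` B)" using H A(1) by (meson dual_order.trans)
      qed
      then obtain f1 where f1: "inj_on f1 A" "\<forall>c\<in>A. (c, f1 c) \<in> R" by blast
      define C2 where "C2 = C - A"
      define R2 where "R2 = {p\<in>R. snd p \<notin> R `` A}"
      have "\<exists>f. inj_on f C2 \<and> (\<forall>c\<in>C2. (c, f c) \<in> R2)"
      proof (rule less.hyps)
        have "C2 \<subset> C" using A unfolding C2_def by blast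
        then show "card C2 < card C" using fin by (rule psubset_card_mono[rotated])
        show "finite C2" using fin by (simp add: C2_def)
        show "finite I" by fact
        show "\<forall>c i. (c,i)\<in>R2 \<longrightarrow> i\<in>I" using RI by (auto simp: R2_def)
        show "\<forall>B\<subseteq>C2. card B \<le> card (R2 `` B)"
        proof (intro allI impI)
          fix B assume B: "B \<subseteq> C2"
          have eq: "R2 `` B = R `` (A \<union> B) - R `` A" unfolding R2_def Image_def by auto
          have "B \<subseteq> C" using B by (auto simp: C2_def)
          then have finB: "finite B" "finite A" using A(1) fin finite_subset by auto
          have disj: "A \<inter> B = {}" using B by (auto simp: C2_def)
          have "A \<union> B \<subseteq> C" using A B by (auto simp: C2_def)
          then have "card (A \<union> B) \<le> card (R `` (A \<union> B))" using H by blast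
          moreover have "card (A \<union> B) = card A + card B" using finB disj card_Un_disjoint by blast
          moreover have "card (R `` (A \<union> B) - R `` A) = card (R `` (A \<union> B)) - card (R `` A)"
            by (rule card_Diff_subset) (use finIm[OF RI] in auto)
          ultimately show "card B \<le> card (R2 `` B)" using eq cardA by simp
        qed
      qed
      then obtain f2 where f2: "inj_on f2 C2" "\<forall>c\<in>C2. (c, f2 c) \<in> R2" by blast
      define f where "f = (\<lambda>x. if x \<in> A then f1 x else f2 x)"
      have "inj_on f C"
      proof (rule inj_onI)
        fix x y assume xy: "x \<in> C" "y \<in> C" "f x = f y"
        show "x = y"
        proof (cases "x \<in> A"; cases "y \<in> A")
          assume "x \<in> A" "y \<in> A" then show ?thesis using xy f1 by (auto simp: f_def inj_on_def)
        next
          assume "x \<notin> A" "y \<notin> A" then show ?thesis using xy f2 by (auto simp: f_def inj_on_def C2_def)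
        next
          assume a: "x \<in> A" "y \<notin> A"
          then have "f1 x \<in> R `` A" "f2 y \<notin> R `` A" using f1 f2 xy by (auto simp: C2_def R2_def)
          then show ?thesis using a xy by (auto simp: f_def)
        next
          assume a: "x \<notin> A" "y \<in> A"
          then have "f1 y \<in> R `` A" "f2 x \<notin> R `` A" using f1 f2 xy by (auto simp: C2_def R2_def)
          then show ?thesis using a xy by (auto simp: f_def)
        qed
      qed
      moreover have "\<forall>x\<in>C. (x, f x) \<in> R"
      proof
        fix x assume x: "x \<in> C"
        show "(x, f x) \<in> R"
        proof (cases "x \<in> A")
          case True then show ?thesis using f1(2) by (simp add: f_def)
        next
          case False
          then have "x \<in> C2" using x by (simp add: C2_def)
          then have "(x, f2 x) \<in> R2" using f2(2) by blast
          then show ?thesis using False by (simp add: f_def R2_def)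
        qed
      qed
      ultimately show ?thesis by blast
    qed
  qed
qed


lemma LP_nonempty: "LP_feasible V E (\<lambda>_. 1)"
  by (simp add: LP_feasible_def)

lemma LP_lower:
  assumes "LP_feasible V E x"
  shows "LP V E \<le> (\<Sum>v\<in>V. x v)"
  unfolding LP_def
proof (rule cInf_lower)
  show "(\<Sum>v\<in>V. x v) \<in> {(\<Sum>v\<in>V. x v) |x. LP_feasible V E x}" using assms by blast
  show "bdd_below {(\<Sum>v\<in>V. x v) |x. LP_feasible V E x}"
    by (rule bdd_belowI[of _ 0]) (auto simp: LP_feasible_def intro!: sum_nonneg)
qed

lemma LP_ge:
  assumes "\<And>x. LP_feasible V E x \<Longrightarrow> b \<le> (\<Sum>v\<in>V. x v)"
  shows "b \<le> LP V E"
  unfolding LP_def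
  by (rule cInf_greatest) (use assms LP_nonempty in auto)

lemma OPT_ex:
  assumes "graph V E"
  shows "\<exists>C. vertex_cover V E C \<and> card C = OPT V E"
proof -
  have "vertex_cover V E V"
  proof -
    have "e \<inter> V \<noteq> {}" if "e \<in> E" for e
    proof -
      have "e \<subseteq> V" "card e = 2" using assms that by (auto simp: graph_def)
      then show ?thesis by (metis Int_absorb2 card.empty zero_neq_numeral)
    qed
    then show ?thesis by (simp add: vertex_cover_def)
  qed
  then have "\<exists>k C. vertex_cover V E C \<and> card C = k" by blast
  then show ?thesis unfolding OPT_def by (rule LeastI_ex)
qed

lemma OPT_le: "vertex_cover V E C \<Longrightarrow> OPT V E \<le> card C"
  unfolding OPT_def by (rule Least_le) blast

lemma LP_le_OPT:
  assumes "graph V E"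
  shows "LP V E \<le> real (OPT V E)"
proof -
  obtain C where C: "vertex_cover V E C" "card C = OPT V E" using OPT_ex[OF assms] by blast
  have CV: "C \<subseteq> V" using C by (simp add: vertex_cover_def)
  have finV: "finite V" using assms by (simp add: graph_def)
  define x :: "'a \<Rightarrow> real" where "x = (\<lambda>v. of_bool (v \<in> C))"
  have "LP_feasible V E x"
    unfolding LP_feasible_def
  proof (intro conjI allI impI ballI)
    fix u v assume uv: "{u, v} \<in> E"
    have "{u,v} \<inter> C \<noteq> {}" using C(1) uv unfolding vertex_cover_def by blast
    then show "1 \<le> x u + x v" by (auto simp: x_def)
  qed (auto simp: x_def)
  then have "LP V E \<le> (\<Sum>v\<in>V. x v)" by (rule LP_lower)
  also have "\<dots> = real (card (V \<inter> {v. v \<in> C}))" unfolding x_def using finV by simp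
  also have "V \<inter> {v. v \<in> C} = C" using CV by blast
  finally show ?thesis using C by simp
qed

lemma hall_defect:
  fixes R :: "('a \<times> 'b) set" and d :: nat
  assumes "finite C" "finite I" "\<forall>c i. (c,i)\<in>R \<longrightarrow> i\<in>I" "\<forall>A\<subseteq>C. card A \<le> card (R `` A) + d"
  shows "\<exists>X f. X \<subseteq> C \<and> card X \<le> d \<and> inj_on f (C - X) \<and> (\<forall>c\<in>C-X. (c, f c) \<in> R)"
proof -
  define R' :: "('a \<times> ('b + nat)) set"
    where "R' = {(c, Inl i) | c i. (c,i)\<in>R} \<union> {(c, Inr k) | c k. c\<in>C \<and> k<d}"
  define I' :: "('b + nat) set" where "I' = Inl ` I \<union> Inr ` {..<d}"
  have "\<exists>g. inj_on g C \<and> (\<forall>c\<in>C. (c, g c) \<in> R')"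
  proof (rule hall)
    show "finite C" by fact
    show "finite I'" using assms(2) by (simp add: I'_def)
    show "\<forall>c i. (c,i)\<in>R' \<longrightarrow> i\<in>I'" using assms(3) by (auto simp: R'_def I'_def)
    show "\<forall>A\<subseteq>C. card A \<le> card (R' `` A)"
    proof (intro allI impI)
      fix A assume A: "A \<subseteq> C"
      show "card A \<le> card (R' `` A)"
      proof (cases "A = {}")
        case True then show ?thesis by simp
      next
        case False
        have eq: "R' `` A = Inl ` (R `` A) \<union> Inr ` {..<d}"
          using False A unfolding R'_def Image_def by auto
        have finRA: "finite (R `` A)" using assms(2,3) finite_subset[of "R `` A" I] by blast
        have "card (R' `` A) = card (Inl ` (R `` A) :: ('b + nat) set) + card (Inr ` {..<d} :: ('b + nat) set)"
          unfolding eq by (subst card_Un_disjoint) (use finRA in auto)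
        also have "\<dots> = card (R `` A) + d" by (simp add: card_image)
        finally show ?thesis using assms(4) A by simp
      qed
    qed
  qed
  then obtain g where g: "inj_on g C" "\<forall>c\<in>C. (c, g c) \<in> R'" by blast
  define X where "X = {c\<in>C. \<not> isl (g c)}"
  define f where "f = (\<lambda>c. projl (g c))"
  have gX: "g ` X \<subseteq> Inr ` {..<d}"
  proof
    fix y assume "y \<in> g ` X"
    then obtain c where c: "c \<in> C" "\<not> isl (g c)" "y = g c" by (auto simp: X_def)
    then have "(c, g c) \<in> R'" using g by blast
    then show "y \<in> Inr ` {..<d}" using c unfolding R'_def by auto
  qed
  have "card X = card (g ` X)" using g(1) by (simp add: card_image X_def inj_on_subset)
  also have "\<dots> \<le> card (Inr ` {..<d} :: ('b + nat) set)" by (rule card_mono) (use gX in auto)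
  also have "\<dots> = d" by (simp add: card_image)
  finally have cX: "card X \<le> d" .
  have isl: "isl (g c)" if "c \<in> C - X" for c using that by (auto simp: X_def)
  have "inj_on f (C - X)"
  proof (rule inj_onI)
    fix x y assume xy: "x \<in> C - X" "y \<in> C - X" "f x = f y"
    then have "g x = g y" using isl[OF xy(1)] isl[OF xy(2)] unfolding f_def
      by (metis sum.collapse(1))
    then show "x = y" using g(1) xy by (auto dest: inj_onD)
  qed
  moreover have "\<forall>c\<in>C-X. (c, f c) \<in> R"
  proof
    fix c assume c: "c \<in> C - X"
    then have "(c, g c) \<in> R'" using g by blast
    moreover have "g c = Inl (f c)" using isl[OF c] by (simp add: f_def)
    ultimately show "(c, f c) \<in> R" unfolding R'_def by auto
  qed
  moreover have "X \<subseteq> C" by (auto simp: X_def)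
  ultimately show ?thesis using cX by blast
qed


theorem mainTheorem10:
  fixes V :: "'a set" and E :: "'a set set"
  assumes "graph V E"
  shows "\<exists>X. X \<subseteq> V \<and> real (card X) \<le> 2 * (real (OPT V E) - LP V E) \<and>
             real (OPT (del_vertices_V V X) (del_vertices_E E X))
               = LP (del_vertices_V V X) (del_vertices_E E X)"
proof -
  have finV: "finite V" and Eg: "\<And>e. e \<in> E \<Longrightarrow> e \<subseteq> V \<and> card e = 2"
    using assms by (auto simp: graph_def)
  obtain C where C: "vertex_cover V E C" "card C = OPT V E" using OPT_ex[OF assms] by blast
  have CV: "C \<subseteq> V" and Ccov: "\<And>e. e \<in> E \<Longrightarrow> e \<inter> C \<noteq> {}" using C(1) by (auto simp: vertex_cover_def)
  have finC: "finite C" using CV finV finite_subset by blast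
  define I where "I = V - C"
  have finI: "finite I" using finV by (simp add: I_def)
  define R where "R = {(c,i). c \<in> C \<and> i \<in> I \<and> {c,i} \<in> E}"
  have RI: "\<forall>c i. (c,i)\<in>R \<longrightarrow> i\<in>I" by (auto simp: R_def)
  define D where "D = (\<lambda>A. card A - card (R `` A)) ` Pow C"
  define d where "d = Max D"
  have finD: "finite D" using finC by (simp add: D_def)
  have "D \<noteq> {}" unfolding D_def by blast
  then have "d \<in> D" using finD by (simp add: d_def)
  then obtain A0 where A0: "A0 \<subseteq> C" "d = card A0 - card (R `` A0)" by (auto simp: D_def)
  have hallc: "\<forall>A\<subseteq>C. card A \<le> card (R `` A) + d"
  proof (intro allI impI)
    fix A assume "A \<subseteq> C"
    then have "card A - card (R `` A) \<in> D" by (simp add: D_def)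
    then have "card A - card (R `` A) \<le> d" using finD by (simp add: d_def)
    then show "card A \<le> card (R `` A) + d" by simp
  qed
  obtain X f where Xf: "X \<subseteq> C" "card X \<le> d" "inj_on f (C - X)" "\<forall>c\<in>C-X. (c, f c) \<in> R"
    using hall_defect[OF finC finI RI hallc] by blast
  define N where "N = R `` A0"
  have NI: "N \<subseteq> I" using RI by (auto simp: N_def)
  define x :: "'a \<Rightarrow> real" where
    "x = (\<lambda>v. of_bool (v \<in> C - A0) + 1/2 * of_bool (v \<in> A0) + 1/2 * of_bool (v \<in> N))"
  have feas: "LP_feasible V E x"
    unfolding LP_feasible_def
  proof (intro conjI allI impI ballI)
    fix u v assume uv: "{u, v} \<in> E"
    have nn: "0 \<le> x w" for w by (simp add: x_def)
    have "{u,v} \<subseteq> V" "card {u,v} = 2" using Eg[OF uv] by auto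
    then have uvV: "u \<in> V" "v \<in> V" "u \<noteq> v" by (auto simp: card_insert_if split: if_splits)
    have "{u,v} \<inter> C \<noteq> {}" using Ccov[OF uv] .
    then have cov: "u \<in> C \<or> v \<in> C" by blast
    show "1 \<le> x u + x v"
    proof (cases "u \<in> C - A0 \<or> v \<in> C - A0")
      case True
      then show ?thesis using nn[of u] nn[of v] by (auto simp: x_def)
    next
      case False
      then have ca: "(u \<in> A0 \<and> v \<in> A0) \<or> (u \<in> A0 \<and> v \<notin> C) \<or> (v \<in> A0 \<and> u \<notin> C)"
        using cov by blast
      show ?thesis
      proof -
        { assume "u \<in> A0" "v \<in> A0" then have ?thesis by (simp add: x_def) }
        moreover
        { assume a: "u \<in> A0" "v \<notin> C"
          then have "(u, v) \<in> R" using A0(1) uvV uv by (auto simp: R_def I_def)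
          then have "v \<in> N" using a by (auto simp: N_def)
          then have ?thesis using a by (simp add: x_def) }
        moreover
        { assume a: "v \<in> A0" "u \<notin> C"
          have "{v,u} \<in> E" using uv by (simp add: insert_commute)
          then have "(v, u) \<in> R" using a A0(1) uvV by (auto simp: R_def I_def)
          then have "u \<in> N" using a by (auto simp: N_def)
          then have ?thesis using a by (simp add: x_def) }
        ultimately show ?thesis using ca by blast
      qed
    qed
  next
    fix v assume "v \<in> V"
    show "0 \<le> x v" by (simp add: x_def)
    have "v \<in> N \<Longrightarrow> v \<notin> C" using NI by (auto simp: I_def)
    then show "x v \<le> 1" using A0(1) by (auto simp: x_def)
  qed
  have NV: "N \<subseteq> V" using NI by (auto simp: I_def)
  have A0V: "A0 \<subseteq> V" using A0(1) CV by blast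
  have "(\<Sum>v\<in>V. x v) = (\<Sum>v\<in>V. of_bool (v \<in> C - A0)) + 1/2 * (\<Sum>v\<in>V. of_bool (v \<in> A0))
           + 1/2 * (\<Sum>v\<in>V. of_bool (v \<in> N))"
    by (simp add: x_def sum.distrib sum_distrib_left)
  also have "\<dots> = real (card (V \<inter> {v. v \<in> C - A0})) + 1/2 * real (card (V \<inter> {v. v \<in> A0}))
           + 1/2 * real (card (V \<inter> {v. v \<in> N}))"
    using finV by (simp only: sum_of_bool_eq)
  also have "V \<inter> {v. v \<in> C - A0} = C - A0" using CV by blast
  also have "V \<inter> {v. v \<in> A0} = A0" using A0V by blast
  also have "V \<inter> {v. v \<in> N} = N" using NV by blast
  also have "card (C - A0) = card C - card A0" using A0(1) finC by (simp add: card_Diff_subset finite_subset)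
  finally have sumx: "(\<Sum>v\<in>V. x v) = real (card C - card A0) + 1/2 * real (card A0) + 1/2 * real (card N)" .
  have cA0: "card A0 \<le> card C" using A0(1) finC by (simp add: card_mono)
  have "real (card C - card A0) = real (card C) - real (card A0)" using cA0 by (simp add: of_nat_diff)
  then have LPub: "LP V E \<le> real (card C) - (real (card A0) - real (card N)) / 2"
    using LP_lower[OF feas] sumx by (simp add: field_simps)
  have dle: "real d \<le> 2 * (real (OPT V E) - LP V E)"
  proof (cases "d = 0")
    case True then show ?thesis using LP_le_OPT[OF assms] by simp
  next
    case False
    then have "real d = real (card A0) - real (card N)" using A0(2) by (simp add: N_def of_nat_diff)
    then show ?thesis using LPub C(2) by (simp add: field_simps)
  qed
  have cardX: "real (card X) \<le> 2 * (real (OPT V E) - LP V E)" using Xf(2) dle by linarith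
  define V' where "V' = del_vertices_V V X"
  define E' where "E' = del_vertices_E E X"
  have V'eq: "V' = V - X" by (simp add: V'_def del_vertices_V_def)
  have E'eq: "E' = {e\<in>E. e \<inter> X = {}}" by (simp add: E'_def del_vertices_E_def)
  have g': "graph V' E'" using assms unfolding graph_def V'eq E'eq by auto
  define C' where "C' = C - X"
  have cov': "vertex_cover V' E' C'"
    using C(1) unfolding vertex_cover_def V'eq E'eq C'_def by blast
  have fI: "f c \<in> I" if "c \<in> C'" for c using Xf(4) that RI by (auto simp: C'_def)
  have fE: "{c, f c} \<in> E'" if "c \<in> C'" for c
  proof -
    have "{c, f c} \<in> E" using Xf(4) that by (auto simp: C'_def R_def)
    moreover have "c \<notin> X" using that by (simp add: C'_def)
    moreover have "f c \<notin> X" using fI[OF that] Xf(1) by (auto simp: I_def)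
    ultimately show ?thesis by (simp add: E'eq)
  qed
  have LPlb: "real (card C') \<le> LP V' E'"
  proof (rule LP_ge)
    fix y assume fy: "LP_feasible V' E' y"
    have C'V': "C' \<subseteq> V'" using cov' by (simp add: vertex_cover_def)
    have fC'V': "f ` C' \<subseteq> V'" using fI Xf(1) by (auto simp: I_def V'eq)
    have disj: "C' \<inter> f ` C' = {}" using fI by (auto simp: I_def C'_def)
    have finV': "finite V'" using finV by (simp add: V'eq)
    have finC': "finite C'" using finC by (simp add: C'_def)
    have injf: "inj_on f C'" using Xf(3) by (simp add: C'_def)
    have "real (card C') = (\<Sum>c\<in>C'. (1::real))" by simp
    also have "\<dots> \<le> (\<Sum>c\<in>C'. y c + y (f c))"
    proof (rule sum_mono)
      fix c assume c: "c \<in> C'"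
      show "1 \<le> y c + y (f c)" using fy fE[OF c] by (simp add: LP_feasible_def)
    qed
    also have "\<dots> = (\<Sum>c\<in>C'. y c) + (\<Sum>c\<in>f ` C'. y c)"
      by (simp add: sum.distrib sum.reindex[OF injf])
    also have "\<dots> = (\<Sum>c\<in>C' \<union> f ` C'. y c)"
      using finC' disj by (simp add: sum.union_disjoint)
    also have "\<dots> \<le> (\<Sum>v\<in>V'. y v)"
      by (rule sum_mono2) (use finV' C'V' fC'V' fy in \<open>auto simp: LP_feasible_def\<close>)
    finally show "real (card C') \<le> (\<Sum>v\<in>V'. y v)" .
  qed
  have "real (OPT V' E') \<le> real (card C')" using OPT_le[OF cov'] by simp
  then have "real (OPT V' E') = LP V' E'" using LPlb LP_le_OPT[OF g'] by linarith
  moreover have "X \<subseteq> V" using Xf(1) CV by blast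
  ultimately show ?thesis using cardX unfolding V'_def E'_def by blast
qed

end
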